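(* Let $a,b,c>0$ and set $M=\mathrm{e}^{B_2}\mathrm{e}^{B_1}$ with $B_1=\begin{bmatrix}-a&-b\\ c&0\end{bmatrix}$, $B_2=\begin{bmatrix}-a&b\\ -c&0\end{bmatrix}$. Write the characteristic polynomial of $M$ as $\lambda^2+\alpha\lambda+\beta$. Then $\beta=\mathrm{e}^{-2a}$ and, with $d=\sqrt{a^2-4bc}$ (a real or purely imaginary number) and provided $d\neq 0$, $$\alpha=-\frac{\mathrm{e}^{-a}\left(a^2\mathrm{e}^{d}+a^2\mathrm{e}^{-d}+2d^2-2a^2\right)}{d^2}.$$ Moreover, both eigenvalues of $M$ have modulus strictly less than $1$.
   Context: This applies to the flying capacitor model with $a=\frac{TR}{2L}$, $b=\frac{T}{2L}$, $c=\frac{T}{2C}$, in which case $M=\mathrm{e}^{\frac T2A_2}\mathrm{e}^{\frac T2A_1}$ for $A_1=\begin{bmatrix}-\frac RL & -\frac1L\\ \frac1C & 0\end{bmatrix}$, $A_2=\begin{bmatrix}-\frac RL & \frac1L\\ -\frac1C & 0\end{bmatrix}$. $\mathrm{e}^{B}$ denotes the matrix exponential. *)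

theory Defs
  imports "HOL-Analysis.Analysis" "HOL-Computational_Algebra.Polynomial"
begin

primrec mat_pow :: "'a::comm_ring_1^'n^'n \<Rightarrow> nat \<Rightarrow> 'a^'n^'n" where
  "mat_pow A 0 = mat 1"
| "mat_pow A (Suc k) = A ** mat_pow A k"

definition mat_exp :: "real^'n^'n \<Rightarrow> real^'n^'n" where
  "mat_exp A = (\<Sum>k. (1 / fact k) *\<^sub>R mat_pow A k)"

definition charpoly :: "real^'n^'n \<Rightarrow> real poly" where
  "charpoly A = det (mat [:0, 1:] - map_matrix (\<lambda>x. [:x:]) A)"

definition is_eigenvalue :: "real^'n^'n \<Rightarrow> complex \<Rightarrow> bool" where
  "is_eigenvalue A z \<longleftrightarrow> (\<exists>v::complex^'n. v \<noteq> 0 \<and> map_matrix complex_of_real A *v v = z *s v)"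

end

theory Submission
  imports Defs
begin


fun pq :: "real \<Rightarrow> real \<Rightarrow> nat \<Rightarrow> real \<times> real" where
  "pq a e 0 = (1, 0)"
| "pq a e (Suc k) = (- e * snd (pq a e k), fst (pq a e k) - a * snd (pq a e k))"

definition pp where "pp a e k = fst (pq a e k)"
definition qq where "qq a e k = snd (pq a e k)"

lemma pp_Suc: "pp a e (Suc k) = - e * qq a e k" and qq_Suc: "qq a e (Suc k) = pp a e k - a * qq a e k"
  and pp0: "pp a e 0 = 1" and qq0: "qq a e 0 = 0"
  by (simp_all add: pp_def qq_def)

lemma mat_pow_B:
  fixes a x y :: real
  defines "B \<equiv> vector [vector [-a, x], vector [y, 0]] :: real^2^2"
  shows "mat_pow B k = pp a (-x*y) k *\<^sub>R mat 1 + qq a (-x*y) k *\<^sub>R B"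
proof (induction k)
  case 0
  then show ?case by (simp add: pp0 qq0)
next
  case (Suc k)
  show ?case
    apply (simp add: Suc pp_Suc qq_Suc)
    apply (simp add: vec_eq_iff forall_2 matrix_matrix_mult_def sum_2 mat_def B_def)
    apply (simp add: algebra_simps)
    done
qed



lemma pq_bound: "\<bar>pp a e k\<bar> \<le> (1 + \<bar>a\<bar> + \<bar>e\<bar>) ^ k \<and> \<bar>qq a e k\<bar> \<le> (1 + \<bar>a\<bar> + \<bar>e\<bar>) ^ k"
proof (induction k)
  case 0 then show ?case by (simp add: pp0 qq0)
next
  case (Suc k)
  let ?K = "1 + \<bar>a\<bar> + \<bar>e\<bar>"
  have K: "?K \<ge> 1" by simp
  have Kk: "?K ^ k \<ge> 0" by simp
  have "\<bar>pp a e (Suc k)\<bar> = \<bar>e\<bar> * \<bar>qq a e k\<bar>" by (simp add: pp_Suc abs_mult)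
  also have "\<dots> \<le> ?K * ?K ^ k" using Suc by (intro mult_mono) auto
  finally have 1: "\<bar>pp a e (Suc k)\<bar> \<le> ?K ^ Suc k" by simp
  have "\<bar>qq a e (Suc k)\<bar> \<le> \<bar>pp a e k\<bar> + \<bar>a\<bar> * \<bar>qq a e k\<bar>" unfolding qq_Suc abs_mult[symmetric] by (rule abs_triangle_ineq4)
  also have "\<dots> \<le> ?K^k + \<bar>a\<bar> * ?K ^ k" using Suc by (intro add_mono mult_left_mono) auto
  also have "\<dots> \<le> ?K * ?K ^ k" using Kk by (simp add: algebra_simps)
  finally show ?case using 1 by simp
qed

lemma summable_pp: "summable (\<lambda>k. pp a e k / fact k)"
proof (rule summable_comparison_test')
  show "summable (\<lambda>k. (1 + \<bar>a\<bar> + \<bar>e\<bar>) ^ k /\<^sub>R fact k)" by (rule summable_exp_generic)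
  show "norm (pp a e k / fact k) \<le> (1 + \<bar>a\<bar> + \<bar>e\<bar>) ^ k /\<^sub>R fact k" for k
  proof -
    have "\<bar>pp a e k\<bar> / fact k \<le> (1 + \<bar>a\<bar> + \<bar>e\<bar>) ^ k / fact k" using pq_bound[of a e k] by (intro divide_right_mono) auto
    then show ?thesis by (simp add: field_simps)
  qed
qed

lemma summable_qq: "summable (\<lambda>k. qq a e k / fact k)"
proof (rule summable_comparison_test')
  show "summable (\<lambda>k. (1 + \<bar>a\<bar> + \<bar>e\<bar>) ^ k /\<^sub>R fact k)" by (rule summable_exp_generic)
  show "norm (qq a e k / fact k) \<le> (1 + \<bar>a\<bar> + \<bar>e\<bar>) ^ k /\<^sub>R fact k" for k
  proof -
    have "\<bar>qq a e k\<bar> / fact k \<le> (1 + \<bar>a\<bar> + \<bar>e\<bar>) ^ k / fact k" using pq_bound[of a e k] by (intro divide_right_mono) auto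
    then show ?thesis by (simp add: field_simps)
  qed
qed

definition PP where "PP a e = (\<Sum>k. pp a e k / fact k)"
definition QQ where "QQ a e = (\<Sum>k. qq a e k / fact k)"

lemma mat_exp_B:
  fixes a x y :: real
  defines "B \<equiv> vector [vector [-a, x], vector [y, 0]] :: real^2^2"
  shows "mat_exp B = PP a (-x*y) *\<^sub>R mat 1 + QQ a (-x*y) *\<^sub>R B"
proof -
  have s1: "(\<lambda>k. (pp a (-x*y) k / fact k) *\<^sub>R (mat 1 :: real^2^2)) sums (PP a (-x*y) *\<^sub>R mat 1)"
    unfolding PP_def by (intro sums_scaleR_left summable_sums summable_pp)
  have s2: "(\<lambda>k. (qq a (-x*y) k / fact k) *\<^sub>R B) sums (QQ a (-x*y) *\<^sub>R B)"
    unfolding QQ_def by (intro sums_scaleR_left summable_sums summable_qq)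
  have "(\<lambda>k. (1 / fact k) *\<^sub>R mat_pow B k) = (\<lambda>k. (pp a (-x*y) k / fact k) *\<^sub>R (mat 1 :: real^2^2) + (qq a (-x*y) k / fact k) *\<^sub>R B)"
  proof (rule ext)
    fix k
    have eq: "mat_pow B k = pp a (-x*y) k *\<^sub>R mat 1 + qq a (-x*y) k *\<^sub>R B"
      unfolding B_def by (rule mat_pow_B)
    show "(1 / fact k) *\<^sub>R mat_pow B k = (pp a (-x*y) k / fact k) *\<^sub>R (mat 1 :: real^2^2) + (qq a (-x*y) k / fact k) *\<^sub>R B"
      unfolding eq scaleR_add_right scaleR_scaleR by simp
  qed
  moreover have "\<dots> sums (PP a (-x*y) *\<^sub>R mat 1 + QQ a (-x*y) *\<^sub>R B)"
    using sums_add[OF s1 s2] .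
  ultimately have "(\<lambda>k. (1 / fact k) *\<^sub>R mat_pow B k) sums (PP a (-x*y) *\<^sub>R mat 1 + QQ a (-x*y) *\<^sub>R B)" by simp
  from sums_unique[OF this] show ?thesis unfolding mat_exp_def by simp
qed

lemma exp_root:
  fixes \<mu> :: complex
  assumes "\<mu>^2 + of_real a * \<mu> + of_real e = 0"
  shows "exp \<mu> = of_real (PP a e) + of_real (QQ a e) * \<mu>"
proof -
  have pw: "\<mu> ^ k = of_real (pp a e k) + of_real (qq a e k) * \<mu>" for k
  proof (induction k)
    case 0 then show ?case by (simp add: pp0 qq0)
  next
    case (Suc k)
    have "\<mu> ^ Suc k = \<mu> * (of_real (pp a e k) + of_real (qq a e k) * \<mu>)" using Suc by simp
    also have "\<dots> = of_real (pp a e k) * \<mu> + of_real (qq a e k) * \<mu>^2" by (simp add: algebra_simps power2_eq_square)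
    also have "\<mu>^2 = - of_real a * \<mu> - of_real e"
    proof -
      have "\<mu>^2 = (\<mu>^2 + of_real a * \<mu> + of_real e) - of_real a * \<mu> - of_real e" by (simp add: algebra_simps)
      then show ?thesis using assms by simp
    qed
    finally show ?case by (simp add: pp_Suc qq_Suc algebra_simps)
  qed
  have s1: "(\<lambda>k. of_real (pp a e k / fact k)) sums (of_real (PP a e) :: complex)"
    unfolding PP_def by (intro sums_of_real summable_sums summable_pp)
  have s2: "(\<lambda>k. of_real (qq a e k / fact k) * \<mu>) sums (of_real (QQ a e) * \<mu>)"
    unfolding QQ_def by (intro sums_mult2 sums_of_real summable_sums summable_qq)
  have "(\<lambda>k. \<mu> ^ k /\<^sub>R fact k) = (\<lambda>k. of_real (pp a e k / fact k) + of_real (qq a e k / fact k) * \<mu>)"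
    by (simp add: pw scaleR_conv_of_real field_simps)
  moreover have "(\<lambda>k. \<mu> ^ k /\<^sub>R fact k) sums exp \<mu>" by (rule exp_converges)
  ultimately have "(\<lambda>k. of_real (pp a e k / fact k) + of_real (qq a e k / fact k) * \<mu>) sums exp \<mu>" by simp
  from sums_unique2[OF this sums_add[OF s1 s2]] show ?thesis .
qed



lemma charpoly_2:
  fixes A :: "real^2^2"
  shows "charpoly A = [: A$1$1 * A$2$2 - A$1$2 * A$2$1, - (A$1$1 + A$2$2), 1 :]"
  unfolding charpoly_def det_2
  by (simp add: mat_def algebra_simps)

lemma M_entries:
  fixes a b c P Q :: real
  defines "M \<equiv> (P *\<^sub>R mat 1 + Q *\<^sub>R (vector [vector [-a, b], vector [-c, 0]] :: real^2^2))
       ** (P *\<^sub>R mat 1 + Q *\<^sub>R (vector [vector [-a, -b], vector [c, 0]] :: real^2^2))"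
  shows "M$1$1 = P^2 - 2*a*P*Q + Q^2*(a^2+b*c)" "M$1$2 = Q^2*a*b" "M$2$1 = Q^2*a*c" "M$2$2 = P^2 + Q^2*b*c"
  unfolding M_def by (simp_all add: matrix_matrix_mult_def sum_2 mat_def power2_eq_square algebra_simps)


lemma sinh_gt_self: fixes y :: real assumes "0 < y" shows "y < sinh y"
proof -
  have "(\<lambda>t. sinh t - t) 0 < (\<lambda>t. sinh t - t) y"
  proof (rule DERIV_pos_imp_increasing_open[OF assms])
    fix t :: real assume t: "0 < t" "t < y"
    have "DERIV (\<lambda>t. sinh t - t) t :> cosh t - 1" by (auto intro!: derivative_eq_intros)
    moreover have "cosh t - 1 > 0"
    proof -
      have "cosh t \<noteq> 1" using t by simp
      then show ?thesis using cosh_real_ge_1[of t] by linarith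
    qed
    ultimately show "\<exists>y. DERIV (\<lambda>t. sinh t - t) t :> y \<and> 0 < y" by blast
  qed (auto intro!: continuous_intros)
  then show ?thesis by simp
qed


lemma tcosh_gt: fixes y :: real assumes "0 < y" shows "sinh y < y * cosh y"
proof -
  have "(\<lambda>t. t * cosh t - sinh t) 0 < (\<lambda>t. t * cosh t - sinh t) y"
  proof (rule DERIV_pos_imp_increasing_open[OF assms])
    fix t :: real assume t: "0 < t" "t < y"
    have "DERIV (\<lambda>t. t * cosh t - sinh t) t :> t * sinh t" by (auto intro!: derivative_eq_intros)
    moreover have "t * sinh t > 0" using t by simp
    ultimately show "\<exists>y. DERIV (\<lambda>t. t * cosh t - sinh t) t :> y \<and> 0 < y" by blast
  qed (auto intro!: continuous_intros)
  then show ?thesis by simp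
qed


lemma sinhc_mono: fixes x y :: real assumes "0 < x" "x < y" shows "sinh x / x < sinh y / y"
proof (rule DERIV_pos_imp_increasing_open[OF assms(2)])
  fix t :: real assume t: "x < t" "t < y"
  then have t0: "t > 0" using assms by simp
  have "DERIV (\<lambda>t. sinh t / t) t :> (cosh t * t - sinh t * 1) / (t * t)"
    using t0 by (auto intro!: derivative_eq_intros)
  moreover have "(cosh t * t - sinh t * 1) / (t * t) > 0" using tcosh_gt[OF t0] t0 by (simp add: algebra_simps)
  ultimately show "\<exists>y. DERIV (\<lambda>t. sinh t / t) t :> y \<and> 0 < y" by blast
next
  show "continuous_on {x..y} (\<lambda>t. sinh t / t)" using assms by (auto intro!: continuous_intros)
qed


lemma root_lt1:
  fixes z :: complex and \<alpha> \<beta> :: real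
  assumes "z^2 + of_real \<alpha> * z + of_real \<beta> = 0" "0 < \<beta>" "\<beta> < 1" "\<bar>\<alpha>\<bar> < 1 + \<beta>"
  shows "cmod z < 1"
proof -
  obtain x y where z: "z = Complex x y" by (cases z)
  from assms(1) have re: "x^2 - y^2 + \<alpha> * x + \<beta> = 0" and im: "2*x*y + \<alpha> * y = 0"
    by (simp_all add: z complex_eq_iff power2_eq_square algebra_simps)
  show ?thesis
  proof (cases "y = 0")
    case False
    have "(2*x + \<alpha>) * y = 0" using im by (simp add: algebra_simps)
    then have "2*x + \<alpha> = 0" using False by simp
    then have "x = -\<alpha>/2" by simp
    then have "\<alpha> * x = -2 * x^2" by (simp add: power2_eq_square)
    with re have "x^2 + y^2 = \<beta>" by linarith
    then have "(cmod z)^2 < 1" using assms(2,3) by (simp add: z cmod_def)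
    then show ?thesis by (simp add: power_less_one_iff abs_less_iff)
  next
    case True
    with re have r: "x^2 + \<alpha> * x + \<beta> = 0" by simp
    have "\<bar>x\<bar> < 1"
    proof (rule ccontr)
      assume "\<not> \<bar>x\<bar> < 1"
      then have "x \<ge> 1 \<or> x \<le> -1" by auto
      then show False
      proof
        assume x: "x \<ge> 1"
        define w where "w = -\<alpha> - x"
        have "x * w = \<beta>" using r by (simp add: w_def power2_eq_square algebra_simps)
        then have "w < 1" "w > 0" using x assms(2,3) by (smt (verit) mult_le_cancel_left1 mult_le_0_iff)+
        then have "(1 - x) * (1 - w) \<le> 0" using x by (simp add: mult_nonpos_nonneg)
        moreover have "(1 - x) * (1 - w) = 1 + \<alpha> + \<beta>" using \<open>x*w=\<beta>\<close> by (simp add: w_def algebra_simps)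
        ultimately show False using assms(4) by simp
      next
        assume x: "x \<le> -1"
        define w where "w = -\<alpha> - x"
        have "x * w = \<beta>" using r by (simp add: w_def power2_eq_square algebra_simps)
        have "w < 0"
        proof (rule ccontr)
          assume "\<not> w < 0"
          then have "x * w \<le> 0" using x by (simp add: mult_nonpos_nonneg)
          then show False using \<open>x * w = \<beta>\<close> assms(2) by simp
        qed
        have "w > -1"
        proof (rule ccontr)
          assume "\<not> w > -1"
          then have "1 * 1 \<le> (-x) * (-w)" using x by (intro mult_mono) auto
          then show False using \<open>x * w = \<beta>\<close> assms(3) by simp
        qed
        have "(1 + x) * (1 + w) \<le> 0" using x \<open>w > -1\<close> by (simp add: mult_nonpos_nonneg)
        moreover have "(1 + x) * (1 + w) = 1 - \<alpha> + \<beta>" using \<open>x*w=\<beta>\<close> by (simp add: w_def algebra_simps)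
        ultimately show False using assms(4) by simp
      qed
    qed
    then show ?thesis by (simp add: z True cmod_def)
  qed
qed


lemma eig_root:
  fixes A :: "real^2^2"
  assumes "is_eigenvalue A z"
  shows "z^2 + of_real (- (A$1$1 + A$2$2)) * z + of_real (A$1$1 * A$2$2 - A$1$2 * A$2$1) = 0"
proof -
  obtain v :: "complex^2" where v: "v \<noteq> 0" "map_matrix complex_of_real A *v v = z *s v"
    using assms unfolding is_eigenvalue_def by blast
  from v(2) have e1: "of_real (A$1$1) * v$1 + of_real (A$1$2) * v$2 = z * v$1"
    and e2: "of_real (A$2$1) * v$1 + of_real (A$2$2) * v$2 = z * v$2"
    by (simp_all add: vec_eq_iff forall_2 matrix_vector_mult_def sum_2)
  let ?D = "z^2 + of_real (- (A$1$1 + A$2$2)) * z + of_real (A$1$1 * A$2$2 - A$1$2 * A$2$1)"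
  have d1: "?D * v$1 = 0"
  proof -
    have "?D * v$1 = (of_real (A$2$2) - z) * (of_real (A$1$1) * v$1 + of_real (A$1$2) * v$2 - z * v$1)
          - of_real (A$1$2) * (of_real (A$2$1) * v$1 + of_real (A$2$2) * v$2 - z * v$2)"
      by (simp add: algebra_simps power2_eq_square)
    then show ?thesis using e1 e2 by simp
  qed
  have d2: "?D * v$2 = 0"
  proof -
    have "?D * v$2 = (of_real (A$1$1) - z) * (of_real (A$2$1) * v$1 + of_real (A$2$2) * v$2 - z * v$2)
          - of_real (A$2$1) * (of_real (A$1$1) * v$1 + of_real (A$1$2) * v$2 - z * v$1)"
      by (simp add: algebra_simps power2_eq_square)
    then show ?thesis using e1 e2 by simp
  qed
  from v(1) have "v$1 \<noteq> 0 \<or> v$2 \<noteq> 0" by (auto simp: vec_eq_iff forall_2)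
  then show ?thesis using d1 d2 by auto
qed



lemma QQ_double:
  assumes "e = a^2/4"
  shows "QQ a e = exp (-a/2)"
proof -
  define m where "m = -a/2"
  have e: "e = m^2" using assms by (simp add: m_def power2_eq_square)
  have am: "a = -2*m" by (simp add: m_def)
  have "pp a e k = (1 - real k) * m^k \<and> qq a e k = real k * m^(k-1)" for k
  proof (induction k)
    case 0 then show ?case by (simp add: pp0 qq0)
  next
    case (Suc k)
    then have ih1: "pp a e k = (1 - real k) * m^k" and ih2: "qq a e k = real k * m^(k-1)" by auto
    show ?case
    proof (cases k)
      case 0 then show ?thesis by (simp add: pp_Suc qq_Suc pp0 qq0)
    next
      case (Suc j)
      show ?thesis
        unfolding pp_Suc qq_Suc ih1 ih2 using Suc by (simp add: am e power2_eq_square algebra_simps)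
    qed
  qed
  then have q: "qq a e k = real k * m^(k-1)" for k by blast
  have "(\<lambda>k. qq a e (Suc k) / fact (Suc k)) = (\<lambda>k. m^k /\<^sub>R fact k)"
    by (rule ext) (simp add: q field_simps del: of_nat_Suc)
  then have "(\<lambda>k. qq a e (Suc k) / fact (Suc k)) sums exp m" using exp_converges[of m] by simp
  then have "(\<lambda>k. qq a e k / fact k) sums exp m" by (rule sums_Suc_imp[rotated]) (simp add: qq0)
  then show ?thesis unfolding QQ_def m_def by (simp add: sums_iff)
qed

lemma root_ok:
  fixes a b c :: real and d :: complex
  assumes "d^2 = of_real (a^2 - 4*b*c)"
  shows "((-of_real a + d)/2)^2 + of_real a * ((-of_real a + d)/2) + of_real (b*c) = 0"
proof -
  have "4 * (((-of_real a + d)/2)^2 + of_real a * ((-of_real a + d)/2) + of_real (b*c)) = d^2 - of_real (a^2 - 4*b*c)"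
    by (simp add: power2_eq_square field_simps)
  then have "4 * (((-of_real a + d)/2)^2 + of_real a * ((-of_real a + d)/2) + of_real (b*c)) = 0"
    using assms by (simp only: diff_self)
  then show ?thesis by (metis mult_eq_0_iff zero_neq_numeral)
qed

lemma QQ_diff:
  fixes a b c :: real and d :: complex
  assumes "d^2 = of_real (a^2 - 4*b*c)"
  shows "exp ((-of_real a + d)/2) - exp ((-of_real a - d)/2) = of_real (QQ a (b*c)) * d"
    and "exp ((-of_real a + d)/2) * exp ((-of_real a - d)/2)
         = of_real (PP a (b*c))^2 - of_real a * of_real (PP a (b*c)) * of_real (QQ a (b*c)) + of_real (b*c) * of_real (QQ a (b*c))^2"
proof -
  have r1: "exp ((-of_real a + d)/2) = of_real (PP a (b*c)) + of_real (QQ a (b*c)) * ((-of_real a + d)/2)"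
    by (rule exp_root[OF root_ok[OF assms]])
  have a2: "(-d)^2 = of_real (a^2 - 4*b*c)" using assms by simp
  have r2: "exp ((-of_real a - d)/2) = of_real (PP a (b*c)) + of_real (QQ a (b*c)) * ((-of_real a - d)/2)"
    using exp_root[OF root_ok[OF a2]] by simp
  show "exp ((-of_real a + d)/2) - exp ((-of_real a - d)/2) = of_real (QQ a (b*c)) * d"
    unfolding r1 r2 by (simp add: field_simps)
  show "exp ((-of_real a + d)/2) * exp ((-of_real a - d)/2)
         = of_real (PP a (b*c))^2 - of_real a * of_real (PP a (b*c)) * of_real (QQ a (b*c)) + of_real (b*c) * of_real (QQ a (b*c))^2"
    unfolding r1 r2
  proof -
    let ?P = "complex_of_real (PP a (b*c))" and ?Q = "complex_of_real (QQ a (b*c))"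
    have "(?P + ?Q * ((-of_real a + d)/2)) * (?P + ?Q * ((-of_real a - d)/2))
        = ?P^2 - of_real a * ?P * ?Q + ?Q^2 * ((of_real a)^2 - d^2)/4"
      by (simp add: power2_eq_square field_simps)
    also have "\<dots> = ?P^2 - of_real a * ?P * ?Q + of_real (b*c) * ?Q^2"
      by (simp add: assms field_simps)
    finally show "(?P + ?Q * ((-of_real a + d)/2)) * (?P + ?Q * ((-of_real a - d)/2)) = ?P^2 - of_real a * ?P * ?Q + of_real (b*c) * ?Q^2" .
  qed
qed



lemma aux_exp_half: "exp (-(a::real)) = exp (-a/2) * exp (-a/2)"
proof -
  have "-a = -a/2 + -a/2" by simp
  then show ?thesis by (metis exp_add)
qed

lemma aux_exp_half2: "(exp (a/2) - exp (-(a/2))) * exp (-a/2) = 1 - exp (-(a::real))"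
proof -
  have h1: "exp (a/2) * exp (-a/2) = 1" using exp_minus_inverse[of "a/2"] by simp
  show ?thesis unfolding left_diff_distrib h1 aux_exp_half[of a] by simp
qed

lemma aux_exp_split: "exp ((-a + s)/2) = exp (s/2) * exp (-a/2)" "exp ((-a - s)/2) = exp (-(s/2)) * exp (-(a::real)/2)"
proof -
  have "(-a + s)/2 = s/2 + -a/2" "(-a - s)/2 = -(s/2) + -a/2" by (simp_all add: field_simps)
  then show "exp ((-a + s)/2) = exp (s/2) * exp (-a/2)" "exp ((-a - s)/2) = exp (-(s/2)) * exp (-(a::real)/2)"
    by (simp_all only: exp_add)
qed

lemma a_lt: fixes a :: real assumes "a > 0" shows "a * exp (-a/2) < 1 - exp (-a)"
proof -
  have "a/2 < sinh (a/2)" using sinh_gt_self[of "a/2"] assms by simp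
  then have "a < exp (a/2) - exp (-(a/2))" by (simp add: sinh_field_def)
  then have "a * exp (-a/2) < (exp (a/2) - exp (-(a/2))) * exp (-a/2)" by (simp add: mult_strict_right_mono)
  also have "\<dots> = 1 - exp (-a)" by (rule aux_exp_half2)
  finally show ?thesis .
qed

lemma Q_bound:
  fixes a b c :: real
  assumes a: "a > 0" and b: "b > 0" and c: "c > 0"
  shows "\<bar>a * QQ a (b*c)\<bar> < 1 - exp (-a)"
proof -
  define r where "r = a^2 - 4*b*c"
  define Q where "Q = QQ a (b*c)"
  have rlt: "r < a^2" using b c by (simp add: r_def)
  consider "r > 0" | "r = 0" | "r < 0" by linarith
  then show ?thesis
  proof cases
    case 1
    define s where "s = sqrt r"
    have s0: "s > 0" using 1 by (simp add: s_def)
    have sa: "s < a" using rlt a unfolding s_def by (metis abs_of_pos real_sqrt_abs real_sqrt_less_mono)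
    have d2: "(complex_of_real s)^2 = of_real (a^2 - 4*b*c)" using 1 by (simp add: s_def r_def[symmetric] flip: of_real_power)
    have "exp ((-of_real a + complex_of_real s)/2) - exp ((-of_real a - complex_of_real s)/2) = of_real Q * of_real s"
      using QQ_diff(1)[OF d2] by (simp add: Q_def)
    then have "complex_of_real (exp ((-a + s)/2) - exp ((-a - s)/2)) = of_real (Q * s)"
      by (simp add: exp_of_real[symmetric])
    then have eq: "exp ((-a + s)/2) - exp ((-a - s)/2) = Q * s" using of_real_eq_iff by blast
    have "exp ((-a - s)/2) < exp ((-a + s)/2)" using s0 by simp
    with eq have "Q * s > 0" by linarith
    then have Qpos: "Q > 0" using s0 by (simp add: zero_less_mult_iff)
    have mono: "sinh (s/2) / (s/2) < sinh (a/2) / (a/2)" using sinhc_mono[of "s/2" "a/2"] s0 sa by simp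
    have "a * sinh (s/2) < s * sinh (a/2)"
      using mono s0 a by (simp add: field_simps)
    then have "a * (exp (s/2) - exp (-(s/2))) < s * (exp (a/2) - exp (-(a/2)))"
      by (simp add: sinh_field_def)
    then have "a * (exp (s/2) - exp (-(s/2))) * exp (-a/2) < s * (exp (a/2) - exp (-(a/2))) * exp (-a/2)"
      by (simp add: mult_strict_right_mono)
    moreover have "a * (exp (s/2) - exp (-(s/2))) * exp (-a/2) = a * (Q * s)"
      unfolding eq[symmetric] aux_exp_split by (simp add: algebra_simps)
    moreover have "s * (exp (a/2) - exp (-(a/2))) * exp (-a/2) = s * (1 - exp (-a))"
      using aux_exp_half2[of a] by simp
    ultimately have "(a * Q) * s < (1 - exp (-a)) * s" by (simp add: algebra_simps)
    then have "a * Q < 1 - exp (-a)" using s0 by simp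
    then show ?thesis using Qpos a by (simp add: Q_def[symmetric])
  next
    case 2
    then have "b * c = a^2/4" by (simp add: r_def)
    then have "Q = exp (-a/2)" unfolding Q_def by (rule QQ_double)
    then show ?thesis using a_lt[OF a] a by (simp add: Q_def[symmetric])
  next
    case 3
    define s where "s = sqrt (-r)"
    have s0: "s > 0" using 3 by (simp add: s_def)
    have d2: "(\<i> * complex_of_real s)^2 = of_real (a^2 - 4*b*c)" using 3
      by (simp add: s_def r_def[symmetric] power_mult_distrib flip: of_real_power)
    have "exp ((-of_real a + \<i> * complex_of_real s)/2) - exp ((-of_real a - \<i> * complex_of_real s)/2) = of_real Q * (\<i> * of_real s)"
      using QQ_diff(1)[OF d2] by (simp add: Q_def)
    then have "Im (exp ((-of_real a + \<i> * complex_of_real s)/2) - exp ((-of_real a - \<i> * complex_of_real s)/2)) = Q * s"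
      by simp
    then have eq: "exp (-a/2) * sin (s/2) - exp (-a/2) * sin (-(s/2)) = Q * s"
      by (simp add: Im_exp)
    then have eq2: "Q * s = 2 * exp (-a/2) * sin (s/2)" by (simp add: algebra_simps)
    have "\<bar>sin (s/2)\<bar> \<le> s/2" using abs_sin_x_le_abs_x[of "s/2"] s0 by simp
    then have "\<bar>Q * s\<bar> \<le> exp (-a/2) * s" unfolding eq2 by (simp add: abs_mult)
    then have "\<bar>Q\<bar> * s \<le> exp (-a/2) * s" by (simp add: abs_mult s0 abs_of_pos)
    then have "\<bar>Q\<bar> \<le> exp (-a/2)" using s0 by simp
    then have "\<bar>a * Q\<bar> \<le> a * exp (-a/2)" using a by (simp add: abs_mult)
    then show ?thesis using a_lt[OF a] by (simp add: Q_def[symmetric])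
  qed
qed



theorem mainTheorem2:
  fixes a b c \<alpha> \<beta> :: real
  assumes "a > 0" and "b > 0" and "c > 0"
    and "charpoly (mat_exp (vector [vector [-a, b], vector [-c, 0]] :: real^2^2)
                   ** mat_exp (vector [vector [-a, -b], vector [c, 0]] :: real^2^2))
         = [:\<beta>, \<alpha>, 1:]"
  shows "\<beta> = exp (-2 * a)
    \<and> (let d = csqrt (complex_of_real (a\<^sup>2 - 4 * b * c)) in
         d \<noteq> 0 \<longrightarrow>
         complex_of_real \<alpha> =
           - (exp (- complex_of_real a) * ((complex_of_real a)\<^sup>2 * exp d
               + (complex_of_real a)\<^sup>2 * exp (- d) + 2 * d\<^sup>2 - 2 * (complex_of_real a)\<^sup>2)) / d\<^sup>2)
    \<and> (\<forall>z. is_eigenvalue (mat_exp (vector [vector [-a, b], vector [-c, 0]] :: real^2^2)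
                   ** mat_exp (vector [vector [-a, -b], vector [c, 0]] :: real^2^2)) z
           \<longrightarrow> cmod z < 1)"
proof -
  define P where "P = PP a (b*c)"
  define Q where "Q = QQ a (b*c)"
  define B2 where "B2 = (vector [vector [-a, b], vector [-c, 0]] :: real^2^2)"
  define B1 where "B1 = (vector [vector [-a, -b], vector [c, 0]] :: real^2^2)"
  have E2: "mat_exp B2 = P *\<^sub>R mat 1 + Q *\<^sub>R B2"
    using mat_exp_B[of a b "-c"] by (simp add: B2_def P_def Q_def)
  have E1: "mat_exp B1 = P *\<^sub>R mat 1 + Q *\<^sub>R B1"
    using mat_exp_B[of a "-b" c] by (simp add: B1_def P_def Q_def)
  define M where "M = mat_exp B2 ** mat_exp B1"
  have Me: "M$1$1 = P^2 - 2*a*P*Q + Q^2*(a^2+b*c)" "M$1$2 = Q^2*a*b" "M$2$1 = Q^2*a*c" "M$2$2 = P^2 + Q^2*b*c"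
    unfolding M_def E1 E2 unfolding B1_def B2_def by (rule M_entries)+
  have "charpoly M = [:\<beta>, \<alpha>, 1:]" using assms(4) by (simp add: M_def B1_def B2_def)
  then have cp: "\<beta> = M$1$1 * M$2$2 - M$1$2 * M$2$1" "\<alpha> = - (M$1$1 + M$2$2)"
    unfolding charpoly_2 by simp_all
  define \<Delta> where "\<Delta> = P^2 - a*P*Q + b*c*Q^2"
  have \<beta>\<Delta>: "\<beta> = \<Delta>^2" unfolding cp Me \<Delta>_def by (simp add: power2_eq_square algebra_simps)
  have \<alpha>\<Delta>: "\<alpha> = -(2*\<Delta> + a^2*Q^2)" unfolding cp Me \<Delta>_def by (simp add: power2_eq_square algebra_simps)
  define d where "d = csqrt (complex_of_real (a\<^sup>2 - 4 * b * c))"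
  have d2: "d^2 = of_real (a^2 - 4*b*c)" by (simp add: d_def)
  have "exp ((-of_real a + d)/2) * exp ((-of_real a - d)/2) = exp (- complex_of_real a)"
  proof -
    have "(-of_real a + d)/2 + (-of_real a - d)/2 = - complex_of_real a" by (simp add: field_simps)
    then show ?thesis by (metis exp_add)
  qed
  then have "exp (- complex_of_real a) = of_real \<Delta>"
    using QQ_diff(2)[OF d2] by (simp add: \<Delta>_def P_def Q_def)
  then have "complex_of_real (exp (-a)) = of_real \<Delta>" by (simp add: exp_of_real[symmetric])
  then have \<Delta>e: "\<Delta> = exp (-a)" using of_real_eq_iff by metis
  have exp2a: "exp (-2*a) = exp (-a)^2"
  proof -
    have "-2*a = -a + -a" by simp
    then show ?thesis by (metis exp_add power2_eq_square)
  qed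
  have part1: "\<beta> = exp (-2 * a)" using \<beta>\<Delta> \<Delta>e exp2a by simp
  have part2: "d \<noteq> 0 \<longrightarrow>
         complex_of_real \<alpha> =
           - (exp (- complex_of_real a) * ((complex_of_real a)\<^sup>2 * exp d
               + (complex_of_real a)\<^sup>2 * exp (- d) + 2 * d\<^sup>2 - 2 * (complex_of_real a)\<^sup>2)) / d\<^sup>2"
  proof
    assume dn: "d \<noteq> 0"
    define w where "w = exp (- complex_of_real a / 2)"
    define u where "u = exp (d/2)"
    have un: "u \<noteq> 0" by (simp add: u_def)
    have e1: "exp ((-of_real a + d)/2) = w * u"
    proof -
      have "(-of_real a + d)/2 = - complex_of_real a / 2 + d/2" by (simp add: field_simps)
      then show ?thesis unfolding w_def u_def by (metis exp_add)
    qed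
    have e2: "exp ((-of_real a - d)/2) = w * inverse u"
    proof -
      have "(-of_real a - d)/2 = - complex_of_real a / 2 + -(d/2)" by (simp add: field_simps)
      then show ?thesis unfolding w_def u_def by (metis exp_add exp_minus)
    qed
    have ed: "exp d = u^2"
    proof -
      have "d = d/2 + d/2" by simp
      then show ?thesis unfolding u_def by (metis exp_add power2_eq_square)
    qed
    have emd: "exp (-d) = inverse u ^ 2" using ed by (simp add: exp_minus power_inverse)
    have ea: "exp (- complex_of_real a) = w^2"
    proof -
      have "- complex_of_real a = - complex_of_real a / 2 + - complex_of_real a / 2" by simp
      then show ?thesis unfolding w_def by (metis exp_add power2_eq_square)
    qed
    have Qd: "of_real Q * d = w * u - w * inverse u" using QQ_diff(1)[OF d2] e1 e2 by (simp add: Q_def)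
    have Qd2: "(of_real Q)^2 * d^2 = w^2 * (u^2 + inverse u ^2 - 2)"
    proof -
      have "(of_real Q)^2 * d^2 = (of_real Q * d)^2" by (simp add: power_mult_distrib)
      also have "\<dots> = (w * u - w * inverse u)^2" using Qd by simp
      also have "\<dots> = w^2 * (u^2 + inverse u ^2 - 2)" using un by (simp add: power2_eq_square field_simps)
      finally show ?thesis .
    qed
    have \<alpha>c: "complex_of_real \<alpha> = -(2 * w^2 + (of_real a)^2 * (of_real Q)^2)"
      using \<alpha>\<Delta> \<Delta>e ea by (simp add: exp_of_real[symmetric])
    have "complex_of_real \<alpha> * d^2 = -(2 * w^2 * d^2 + (of_real a)^2 * ((of_real Q)^2 * d^2))"
      unfolding \<alpha>c by (simp add: algebra_simps)
    also have "\<dots> = - (exp (- complex_of_real a) * ((complex_of_real a)\<^sup>2 * exp d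
               + (complex_of_real a)\<^sup>2 * exp (- d) + 2 * d\<^sup>2 - 2 * (complex_of_real a)\<^sup>2))"
      unfolding Qd2 ed emd ea by (simp add: algebra_simps)
    finally show "complex_of_real \<alpha> =
           - (exp (- complex_of_real a) * ((complex_of_real a)\<^sup>2 * exp d
               + (complex_of_real a)\<^sup>2 * exp (- d) + 2 * d\<^sup>2 - 2 * (complex_of_real a)\<^sup>2)) / d\<^sup>2"
      using dn by (simp add: field_simps)
  qed
  have part3: "cmod z < 1" if z: "is_eigenvalue M z" for z
  proof -
    have r: "z^2 + of_real \<alpha> * z + of_real \<beta> = 0" using eig_root[OF z] cp by simp
    have ea: "0 < exp (-a)" "exp (-a) < 1" using assms(1) by simp_all
    have qb: "\<bar>a * Q\<bar> < 1 - exp (-a)" using Q_bound[OF assms(1-3)] by (simp add: Q_def)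
    have "\<bar>a * Q\<bar>^2 < (1 - exp (-a))^2" by (rule power_strict_mono[OF qb]) simp_all
    then have "(a * Q)^2 < (1 - exp (-a))^2" by simp
    then have h1: "a^2 * Q^2 < 1 - 2 * exp (-a) + exp (-a)^2" by (simp add: power2_eq_square algebra_simps)
    have h2: "\<beta> = exp (-a)^2" using part1 exp2a by simp
    have h3: "\<alpha> = -(2*exp (-a) + a^2*Q^2)" using \<alpha>\<Delta> \<Delta>e by simp
    have h4: "a^2 * Q^2 \<ge> 0" by simp
    have "\<alpha> \<le> 0" using h3 h4 ea by linarith
    then have "\<bar>\<alpha>\<bar> = 2*exp (-a) + a^2*Q^2" using h3 by simp
    then have "\<bar>\<alpha>\<bar> < 1 + \<beta>" using h1 h2 by linarith
    moreover have "0 < \<beta>" "\<beta> < 1" using part1 assms(1) by simp_all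
    ultimately show ?thesis using root_lt1[OF r] by simp
  qed
  show ?thesis
    using part1 part2 part3 unfolding Let_def d_def[symmetric] M_def B1_def B2_def by blast
qed


end
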